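(* Let $F$, $G$, $\pi$, $\Pi$ be as in the context, and let $\Pi_1\colon\Sigma_N\times I\to\Sigma_N$ and $\Pi_1^A\colon\Sigma_A\times I\to\Sigma_A$ be the projections onto the first coordinate. Then $\pi\circ\Pi_1^A=\Pi_1\circ\Pi$. Moreover, if $\lambda_0$ is a Borel probability on $\Sigma_N$, $\lambda$ is a Borel probability on $\Sigma_A$ with $\pi_*\lambda=\lambda_0$, and $\mu$ is an ergodic $G$-invariant probability on $\Sigma_A\times I$ with $(\Pi_1^A)_*\mu=\lambda$, then $\Pi_*\mu$ is an ergodic $F$-invariant probability on $\Sigma_N\times I$ and $(\Pi_1)_*(\Pi_*\mu)=\lambda_0$.
   Context: $I=[0,1]$, $R(x)=1-x$. $F(\xi,p)=(\sigma(\xi),f_{\xi_0}(p))$ on $\Sigma_N\times I$, $\Sigma_N=\{1,\ldots,N\}^{\mathbb Z}$, with $f_i$ $C^1$-diffeomorphisms onto their images. $\mathcal I_P$ / $\mathcal I_R$: indices of orientation preserving / reversing $f_i$. $A=(a_{ij})_{i,j=1}^{2N}$ with $a_{ij}=1$ if ($i\in\mathcal I_P$, $j\le N$), or ($i\in\mathcal I_R$, $j>N$), or ($i-N\in\mathcal I_P$, $j>N$), or ($i-N\in\mathcal I_R$, $j\le N$), else $0$; $\Sigma_A$ the $A$-admissible sequences in $\{1,\ldots,2N\}^{\mathbb Z}$ with shift $\sigma_A$; $\pi(\omega)_n=\overline{\omega_n}$ ($\overline i=i$ for $i\le N$, $\overline i=i-N$ otherwise). $G(\omega,x)=(\sigma_A(\omega),g_{\omega_0}(x))$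 with $g_i=f_i$, $g_{i+N}=R\circ f_i\circ R$ ($i\in\mathcal I_P$), $g_i=R\circ f_i$, $g_{i+N}=f_i\circ R$ ($i\in\mathcal I_R$). $C=\{\omega\colon\omega_0\le N\}$; $\Pi(\omega,x)=(\pi(\omega),x)$ if $\omega\in C$, $(\pi(\omega),R(x))$ otherwise. *)

theory Defs
  imports "HOL-Probability.Probability"
begin

definition Iv :: "real set" where "Iv = {0..1}"
definition Rf :: "real \<Rightarrow> real" where "Rf x = 1 - x"

text \<open>C^1 diffeomorphism of I onto its image (derivative one-sided at endpoints).
  A C^1 injective map with nowhere vanishing derivative has a C^1 inverse.\<close>
definition C1_diffeo_onto_image :: "(real \<Rightarrow> real) \<Rightarrow> bool" where
  "C1_diffeo_onto_image h \<longleftrightarrow> inj_on h Iv \<and>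
     (\<exists>h'. (\<forall>x\<in>Iv. (h has_real_derivative h' x) (at x within Iv))
          \<and> continuous_on Iv h' \<and> (\<forall>x\<in>Iv. h' x \<noteq> 0))"

definition orient_pres :: "(real \<Rightarrow> real) \<Rightarrow> bool" where
  "orient_pres h \<longleftrightarrow> (\<forall>x\<in>Iv. \<forall>y\<in>Iv. x < y \<longrightarrow> h x < h y)"
definition orient_rev :: "(real \<Rightarrow> real) \<Rightarrow> bool" where
  "orient_rev h \<longleftrightarrow> (\<forall>x\<in>Iv. \<forall>y\<in>Iv. x < y \<longrightarrow> h y < h x)"

definition IP :: "nat \<Rightarrow> (nat \<Rightarrow> real \<Rightarrow> real) \<Rightarrow> nat set" where
  "IP N f = {i\<in>{1..N}. orient_pres (f i)}"
definition IR :: "nat \<Rightarrow> (nat \<Rightarrow> real \<Rightarrow> real) \<Rightarrow> nat set" where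
  "IR N f = {i\<in>{1..N}. orient_rev (f i)}"

definition SigmaN :: "nat \<Rightarrow> (int \<Rightarrow> nat) set" where
  "SigmaN N = {\<xi>. \<forall>n. \<xi> n \<in> {1..N}}"

definition shift :: "(int \<Rightarrow> nat) \<Rightarrow> (int \<Rightarrow> nat)" where
  "shift \<xi> = (\<lambda>n. \<xi> (n + 1))"

definition Amat :: "nat \<Rightarrow> (nat \<Rightarrow> real \<Rightarrow> real) \<Rightarrow> nat \<Rightarrow> nat \<Rightarrow> bool" where
  "Amat N f i j \<longleftrightarrow>
     (i \<in> IP N f \<and> j \<le> N) \<or> (i \<in> IR N f \<and> j > N) \<or>
     (i > N \<and> i - N \<in> IP N f \<and> j > N) \<or> (i > N \<and> i - N \<in> IR N f \<and> j \<le> N)"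

definition SigmaA :: "nat \<Rightarrow> (nat \<Rightarrow> real \<Rightarrow> real) \<Rightarrow> (int \<Rightarrow> nat) set" where
  "SigmaA N f = {\<omega>. (\<forall>n. \<omega> n \<in> {1..2*N}) \<and> (\<forall>n. Amat N f (\<omega> n) (\<omega> (n + 1)))}"

definition bar :: "nat \<Rightarrow> nat \<Rightarrow> nat" where
  "bar N i = (if i \<le> N then i else i - N)"

definition piA :: "nat \<Rightarrow> (int \<Rightarrow> nat) \<Rightarrow> (int \<Rightarrow> nat)" where
  "piA N \<omega> = (\<lambda>n. bar N (\<omega> n))"

definition gmap :: "nat \<Rightarrow> (nat \<Rightarrow> real \<Rightarrow> real) \<Rightarrow> nat \<Rightarrow> real \<Rightarrow> real" where
  "gmap N f i =
     (if i \<le> N then (if i \<in> IP N f then f i else Rf \<circ> f i)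
      else (if i - N \<in> IP N f then Rf \<circ> f (i - N) \<circ> Rf else f (i - N) \<circ> Rf))"

definition Fmap :: "(nat \<Rightarrow> real \<Rightarrow> real) \<Rightarrow> (int \<Rightarrow> nat) \<times> real \<Rightarrow> (int \<Rightarrow> nat) \<times> real" where
  "Fmap f z = (shift (fst z), f (fst z 0) (snd z))"

definition Gmap :: "nat \<Rightarrow> (nat \<Rightarrow> real \<Rightarrow> real) \<Rightarrow> (int \<Rightarrow> nat) \<times> real \<Rightarrow> (int \<Rightarrow> nat) \<times> real" where
  "Gmap N f z = (shift (fst z), gmap N f (fst z 0) (snd z))"

definition PiMap :: "nat \<Rightarrow> (int \<Rightarrow> nat) \<times> real \<Rightarrow> (int \<Rightarrow> nat) \<times> real" where
  "PiMap N z = (if fst z 0 \<le> N then (piA N (fst z), snd z) else (piA N (fst z), Rf (snd z)))"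

definition SN :: "nat \<Rightarrow> (int \<Rightarrow> nat) measure" where
  "SN N = restrict_space borel (SigmaN N)"
definition SA :: "nat \<Rightarrow> (nat \<Rightarrow> real \<Rightarrow> real) \<Rightarrow> (int \<Rightarrow> nat) measure" where
  "SA N f = restrict_space borel (SigmaA N f)"
definition SNI :: "nat \<Rightarrow> ((int \<Rightarrow> nat) \<times> real) measure" where
  "SNI N = restrict_space borel (SigmaN N \<times> Iv)"
definition SAI :: "nat \<Rightarrow> (nat \<Rightarrow> real \<Rightarrow> real) \<Rightarrow> ((int \<Rightarrow> nat) \<times> real) measure" where
  "SAI N f = restrict_space borel (SigmaA N f \<times> Iv)"

definition invariant_prob :: "'a measure \<Rightarrow> ('a \<Rightarrow> 'a) \<Rightarrow> bool" where
  "invariant_prob M T \<longleftrightarrow> prob_space M \<and> T \<in> M \<rightarrow>\<^sub>M M \<and> distr M M T = M"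

definition ergodic_prob :: "'a measure \<Rightarrow> ('a \<Rightarrow> 'a) \<Rightarrow> bool" where
  "ergodic_prob M T \<longleftrightarrow> invariant_prob M T \<and>
     (\<forall>A\<in>sets M. T -` A \<inter> space M = A \<longrightarrow> emeasure M A = 0 \<or> emeasure M A = 1)"

end

theory Submission imports Defs begin

lemma space_rb[simp]: "space (restrict_space borel S) = S"
  by (simp add: space_restrict_space)

lemma bar_le[simp]: "i \<le> 2*N \<Longrightarrow> bar N i \<le> N"
  by (auto simp add: bar_def)
lemma bar_ge[simp]: "Suc 0 \<le> i \<Longrightarrow> Suc 0 \<le> bar N i"
  by (auto simp add: bar_def)

lemma cont_coord: "continuous_on S (\<lambda>x::int\<Rightarrow>nat. x n)"
  by (rule continuous_on_subset[OF continuous_on_product_coordinates]) simp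

lemma cont_fst0: "continuous_on S (\<lambda>z::(int\<Rightarrow>nat)\<times>real. fst z n)"
  by (rule continuous_on_compose2[OF cont_coord[of UNIV n] continuous_on_fst[OF continuous_on_id]]) simp

lemma piA_cont: "continuous_on S (piA N)"
  unfolding piA_def
  apply (rule continuous_on_coordinatewise_then_product)
  apply (rule continuous_on_compose2[OF Topological_Spaces.continuous_on_discrete[of UNIV] cont_coord])
  apply simp
  done

lemma shift_cont: "continuous_on S shift"
  unfolding shift_def
  apply (rule continuous_on_coordinatewise_then_product)
  apply (rule cont_coord)
  done

lemma fst_SNI: "fst \<in> SNI N \<rightarrow>\<^sub>M SN N"
  unfolding SNI_def SN_def
  by (intro measurable_restrict_space2 borel_measurable_continuous_on_restrict continuous_on_fst continuous_on_id) auto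

lemma fst_SAI: "fst \<in> SAI N f \<rightarrow>\<^sub>M SA N f"
  unfolding SAI_def SA_def
  by (intro measurable_restrict_space2 borel_measurable_continuous_on_restrict continuous_on_fst continuous_on_id) auto

lemma bar_in: "i \<in> {1..2*N} \<Longrightarrow> bar N i \<in> {1..N}"
  unfolding bar_def by auto

lemma piA_SA: "piA N \<in> SA N f \<rightarrow>\<^sub>M SN N"
  unfolding SA_def SN_def
  by (intro measurable_restrict_space2 borel_measurable_continuous_on_restrict piA_cont)
     (auto simp: SigmaA_def SigmaN_def piA_def)

lemma idx_meas:
  assumes "\<And>z. z \<in> space M \<Longrightarrow> fst z 0 \<in> A" 
    and "space M = S" and "sets M = sets (restrict_space borel S)"
  shows "(\<lambda>z::(int\<Rightarrow>nat)\<times>real. fst z 0) \<in> M \<rightarrow>\<^sub>M count_space A"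
proof -
  have c: "(\<lambda>z::(int\<Rightarrow>nat)\<times>real. fst z 0) \<in> restrict_space borel S \<rightarrow>\<^sub>M borel"
    by (intro borel_measurable_continuous_on_restrict cont_fst0)
  show ?thesis
    unfolding measurable_count_space_eq2_countable
  proof safe
    fix a
    have "(\<lambda>z::(int\<Rightarrow>nat)\<times>real. fst z 0) -` {a} \<inter> space (restrict_space borel S) \<in> sets (restrict_space borel S)"
      by (rule measurable_sets[OF c]) simp
    then show "(\<lambda>z. fst z 0) -` {a} \<inter> space M \<in> sets M" using assms by simp
  qed (use assms in auto)
qed

lemma Pi_SAI: "PiMap N \<in> SAI N f \<rightarrow>\<^sub>M SNI N"
proof -
  define h where "h = (\<lambda>i z. if i \<le> N then (piA N (fst z), snd z) else (piA N (fst z), Rf (snd z)))"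
  have eq: "PiMap N = (\<lambda>z. h (fst z 0) z)" by (rule ext) (simp add: PiMap_def h_def)
  have "(\<lambda>z. h (fst z 0) z) \<in> SAI N f \<rightarrow>\<^sub>M SNI N"
  proof (rule measurable_compose_countable'[where I="{1..2*N}"])
    show "(\<lambda>z::(int\<Rightarrow>nat)\<times>real. fst z 0) \<in> SAI N f \<rightarrow>\<^sub>M count_space {1..2*N}"
      by (rule idx_meas[where S="SigmaA N f \<times> Iv"]) (auto simp: SAI_def SigmaA_def)
  next
    fix i assume i: "i \<in> {1..2*N}"
    have c1: "continuous_on UNIV (\<lambda>z::(int\<Rightarrow>nat)\<times>real. piA N (fst z))"
      by (rule continuous_on_compose2[OF piA_cont[of UNIV] continuous_on_fst[OF continuous_on_id]]) simp
    have c2: "continuous_on UNIV (\<lambda>z::(int\<Rightarrow>nat)\<times>real. Rf (snd z))"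
      unfolding Rf_def by (intro continuous_on_diff continuous_on_const continuous_on_snd continuous_on_id)
    have c3: "continuous_on UNIV (\<lambda>z::(int\<Rightarrow>nat)\<times>real. snd z)"
      by (intro continuous_on_snd continuous_on_id)
    have c: "continuous_on UNIV (h i)"
    proof (cases "i \<le> N")
      case True
      then show ?thesis unfolding h_def using continuous_on_Pair[OF c1 c3] by simp
    next
      case False
      then show ?thesis unfolding h_def using continuous_on_Pair[OF c1 c2] by simp
    qed
    show "(\<lambda>z. h i z) \<in> SAI N f \<rightarrow>\<^sub>M SNI N"
      unfolding SAI_def SNI_def
      apply (intro measurable_restrict_space2 borel_measurable_continuous_on_restrict)
       apply (auto simp: SigmaA_def SigmaN_def piA_def Iv_def Rf_def h_def)[1]
      apply (rule continuous_on_subset[OF c], simp)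
      done
  qed auto
  then show ?thesis unfolding eq .
qed

lemma Fmap_SNI:
  assumes "\<forall>i\<in>{1..N}. continuous_on Iv (f i) \<and> f i ` Iv \<subseteq> Iv"
  shows "Fmap f \<in> SNI N \<rightarrow>\<^sub>M SNI N"
proof -
  define h where "h = (\<lambda>i z. (shift (fst z), f i (snd (z::(int\<Rightarrow>nat)\<times>real))))"
  have eq: "Fmap f = (\<lambda>z. h (fst z 0) z)" by (rule ext) (simp add: Fmap_def h_def)
  have "(\<lambda>z. h (fst z 0) z) \<in> SNI N \<rightarrow>\<^sub>M SNI N"
  proof (rule measurable_compose_countable'[where I="{1..N}"])
    show "(\<lambda>z::(int\<Rightarrow>nat)\<times>real. fst z 0) \<in> SNI N \<rightarrow>\<^sub>M count_space {1..N}"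
      by (rule idx_meas[where S="SigmaN N \<times> Iv"]) (auto simp: SNI_def SigmaN_def)
  next
    fix i assume i: "i \<in> {1..N}"
    then have ci: "continuous_on Iv (f i)" and im: "f i ` Iv \<subseteq> Iv" using assms by auto
    have c: "continuous_on (SigmaN N \<times> Iv) (\<lambda>z. (shift (fst z), f i (snd z)))"
      apply (intro continuous_on_Pair continuous_on_compose2[OF shift_cont[of UNIV] continuous_on_fst[OF continuous_on_id]])
       apply simp
      apply (rule continuous_on_compose2[OF ci continuous_on_snd[OF continuous_on_id]])
      apply auto
      done
    show "(\<lambda>z. h i z) \<in> SNI N \<rightarrow>\<^sub>M SNI N"
      unfolding SNI_def h_def
      apply (intro measurable_restrict_space2 borel_measurable_continuous_on_restrict c)
      using im apply (auto simp: SigmaN_def shift_def)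
      done
  qed simp
  then show ?thesis unfolding eq .
qed

lemma comm:
  assumes "z \<in> SigmaA N f \<times> Iv" and N: "N \<ge> 1"
  shows "Fmap f (PiMap N z) = PiMap N (Gmap N f z)"
proof -
  obtain w x where z: "z = (w, x)" by (cases z)
  have w0: "w 0 \<in> {1..2*N}" and A: "Amat N f (w 0) (w 1)" and x: "x \<in> Iv"
    using assms(1) unfolding z SigmaA_def by (auto dest: spec[of _ 0])
  have sh: "piA N (shift w) = shift (piA N w)" by (simp add: piA_def shift_def)
  have s0: "shift w 0 = w 1" by (simp add: shift_def)
  have pre: "\<not> (orient_pres h \<and> orient_rev h)" for h
    unfolding orient_pres_def orient_rev_def Iv_def
    by (metis atLeastAtMost_iff dual_order.refl less_asym zero_le_one zero_less_one)
  have f1: "fst (Fmap f (PiMap N z)) = fst (PiMap N (Gmap N f z))"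
    by (simp add: z Fmap_def PiMap_def Gmap_def sh)
  have p0: "piA N w 0 = bar N (w 0)" by (simp add: piA_def)
  have f2: "snd (Fmap f (PiMap N z)) = snd (PiMap N (Gmap N f z))"
    using w0 A pre[of "f (w 0)"] pre[of "f (w 0 - N)"]
    by (auto simp: z Fmap_def PiMap_def Gmap_def gmap_def s0 p0 Amat_def IP_def IR_def Rf_def bar_def)
  show ?thesis using f1 f2 by (simp add: prod_eq_iff)
qed

theorem lemma3p14:
  fixes N :: nat and f :: "nat \<Rightarrow> real \<Rightarrow> real"
  assumes "N \<ge> 1"
    and "\<forall>i\<in>{1..N}. C1_diffeo_onto_image (f i) \<and> f i ` Iv \<subseteq> Iv"
  shows "(\<forall>z\<in>SigmaA N f \<times> Iv. piA N (fst z) = fst (PiMap N z))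
    \<and> (\<forall>lam0 lam \<mu>.
         prob_space lam0 \<and> sets lam0 = sets (SN N) \<and>
         prob_space lam \<and> sets lam = sets (SA N f) \<and>
         distr lam (SN N) (piA N) = lam0 \<and>
         sets \<mu> = sets (SAI N f) \<and> ergodic_prob \<mu> (Gmap N f) \<and>
         distr \<mu> (SA N f) fst = lam
       \<longrightarrow> ergodic_prob (distr \<mu> (SNI N) (PiMap N)) (Fmap f) \<and>
           distr (distr \<mu> (SNI N) (PiMap N)) (SN N) fst = lam0)"
proof (intro conjI allI impI)
  show "\<forall>z\<in>SigmaA N f \<times> Iv. piA N (fst z) = fst (PiMap N z)"
    by (simp add: PiMap_def)
next
  fix lam0 lam \<mu>
  assume H: "prob_space lam0 \<and> sets lam0 = sets (SN N) \<and>
         prob_space lam \<and> sets lam = sets (SA N f) \<and>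
         distr lam (SN N) (piA N) = lam0 \<and>
         sets \<mu> = sets (SAI N f) \<and> ergodic_prob \<mu> (Gmap N f) \<and>
         distr \<mu> (SA N f) fst = lam"
  have s\<mu>: "sets \<mu> = sets (SAI N f)" using H by blast
  have sp\<mu>: "space \<mu> = SigmaA N f \<times> Iv"
    using sets_eq_imp_space_eq[OF s\<mu>] by (simp add: SAI_def)
  have erg: "ergodic_prob \<mu> (Gmap N f)" using H by blast
  then have ps\<mu>: "prob_space \<mu>" and G: "Gmap N f \<in> \<mu> \<rightarrow>\<^sub>M \<mu>" and Ginv: "distr \<mu> \<mu> (Gmap N f) = \<mu>"
    and Gerg: "\<forall>A\<in>sets \<mu>. Gmap N f -` A \<inter> space \<mu> = A \<longrightarrow> emeasure \<mu> A = 0 \<or> emeasure \<mu> A = 1"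
    unfolding ergodic_prob_def invariant_prob_def by auto
  have PiM: "PiMap N \<in> \<mu> \<rightarrow>\<^sub>M SNI N"
    unfolding measurable_cong_sets[OF s\<mu> refl] by (rule Pi_SAI)
  have fstM: "fst \<in> \<mu> \<rightarrow>\<^sub>M SA N f"
    unfolding measurable_cong_sets[OF s\<mu> refl] by (rule fst_SAI)
  define M where "M = distr \<mu> (SNI N) (PiMap N)"
  have sM: "sets M = sets (SNI N)" by (simp add: M_def)
  have spM: "space M = SigmaN N \<times> Iv" by (simp add: M_def SNI_def)
  have psM: "prob_space M" unfolding M_def
    by (rule prob_space.prob_space_distr[OF ps\<mu> PiM])
  have cf: "\<forall>i\<in>{1..N}. continuous_on Iv (f i) \<and> f i ` Iv \<subseteq> Iv"
  proof
    fix i assume "i \<in> {1..N}"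
    then have "C1_diffeo_onto_image (f i)" and "f i ` Iv \<subseteq> Iv" using assms(2) by auto
    then obtain h' where "\<forall>x\<in>Iv. (f i has_real_derivative h' x) (at x within Iv)"
      unfolding C1_diffeo_onto_image_def by blast
    then have "continuous_on Iv (f i)" by (intro DERIV_continuous_on) auto
    then show "continuous_on Iv (f i) \<and> f i ` Iv \<subseteq> Iv" using \<open>f i ` Iv \<subseteq> Iv\<close> by blast
  qed
  have FS: "Fmap f \<in> SNI N \<rightarrow>\<^sub>M SNI N" by (rule Fmap_SNI[OF cf])
  have FM: "Fmap f \<in> M \<rightarrow>\<^sub>M M"
    unfolding measurable_cong_sets[OF sM sM] by (rule FS)
  have cm: "Fmap f (PiMap N z) = PiMap N (Gmap N f z)" if "z \<in> space \<mu>" for z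
  proof -
    have "z \<in> SigmaA N f \<times> Iv" using that sp\<mu> by simp
    then show ?thesis by (rule comm[OF _ assms(1)])
  qed
  have "distr M M (Fmap f) = distr M (SNI N) (Fmap f)"
  proof (rule measure_eqI)
    show "sets (distr M M (Fmap f)) = sets (distr M (SNI N) (Fmap f))" using sM by simp
  next
    fix X assume X: "X \<in> sets (distr M M (Fmap f))"
    then have X1: "X \<in> sets M" by simp
    then have X2: "X \<in> sets (SNI N)" using sM by simp
    show "emeasure (distr M M (Fmap f)) X = emeasure (distr M (SNI N) (Fmap f)) X"
      using emeasure_distr[OF FM X1] emeasure_distr[OF FS[folded measurable_cong_sets[OF sM refl]] X2]
      by simp
  qed
  also have "\<dots> = distr \<mu> (SNI N) (Fmap f \<circ> PiMap N)"
    unfolding M_def by (rule distr_distr[OF FS PiM])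
  also have "\<dots> = distr \<mu> (SNI N) (PiMap N \<circ> Gmap N f)"
    by (rule distr_cong) (auto simp: cm)
  also have "\<dots> = distr (distr \<mu> \<mu> (Gmap N f)) (SNI N) (PiMap N)"
    by (rule distr_distr[OF PiM G, symmetric])
  also have "\<dots> = M" by (simp add: Ginv M_def)
  finally have inv: "distr M M (Fmap f) = M" .
  have ergM: "emeasure M A = 0 \<or> emeasure M A = 1"
    if A: "A \<in> sets M" and AF: "Fmap f -` A \<inter> space M = A" for A
  proof -
    have AS: "A \<in> sets (SNI N)" using A sM by simp
    define B where "B = PiMap N -` A \<inter> space \<mu>"
    have B: "B \<in> sets \<mu>" unfolding B_def by (rule measurable_sets[OF PiM AS])
    have eq: "emeasure M A = emeasure \<mu> B"
      unfolding M_def B_def by (rule emeasure_distr[OF PiM AS])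
    have PiS: "PiMap N z \<in> space M" if "z \<in> space \<mu>" for z
      using measurable_space[OF PiM that] spM by (simp add: SNI_def)
    have GS: "Gmap N f z \<in> space \<mu>" if "z \<in> space \<mu>" for z
      using measurable_space[OF G that] .
    have "Gmap N f -` B \<inter> space \<mu> = B"
    proof (intro set_eqI iffI)
      fix z assume "z \<in> Gmap N f -` B \<inter> space \<mu>"
      then have z: "z \<in> space \<mu>" and "PiMap N (Gmap N f z) \<in> A" by (auto simp: B_def)
      then have "Fmap f (PiMap N z) \<in> A" using cm by simp
      then have "PiMap N z \<in> Fmap f -` A \<inter> space M" using PiS[OF z] by simp
      then show "z \<in> B" using AF z by (simp add: B_def)
    next
      fix z assume "z \<in> B"
      then have z: "z \<in> space \<mu>" and "PiMap N z \<in> A" by (auto simp: B_def)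
      then have "PiMap N z \<in> Fmap f -` A \<inter> space M" using AF by simp
      then have "PiMap N (Gmap N f z) \<in> A" using cm[OF z] by simp
      then show "z \<in> Gmap N f -` B \<inter> space \<mu>" using GS[OF z] z by (simp add: B_def)
    qed
    then show ?thesis using Gerg B eq by simp
  qed
  show "ergodic_prob (distr \<mu> (SNI N) (PiMap N)) (Fmap f)"
    unfolding M_def[symmetric] ergodic_prob_def invariant_prob_def
    using psM FM inv ergM by blast
  have "distr M (SN N) fst = distr \<mu> (SN N) (fst \<circ> PiMap N)"
    unfolding M_def by (rule distr_distr[OF fst_SNI PiM])
  also have "\<dots> = distr \<mu> (SN N) (piA N \<circ> fst)"
    by (rule distr_cong) (auto simp: PiMap_def)
  also have "\<dots> = distr (distr \<mu> (SA N f) fst) (SN N) (piA N)"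
    by (rule distr_distr[OF piA_SA fstM, symmetric])
  also have "\<dots> = lam0" using H by simp
  finally show "distr (distr \<mu> (SNI N) (PiMap N)) (SN N) fst = lam0"
    unfolding M_def .
qed

end
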